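(* There exist constants $C>0$ and $n_0$ such that for every $n\ge n_0$ and every assignment $x:V\to\{-1,1\}$, we have $F_4\ge F_2^2-\frac{C}{n}$, where $F_2=\mathbb E_{(\mathbf v_1,\mathbf v_2)\sim\mathcal D_2}[x_{\mathbf v_1}x_{\mathbf v_2}]$ and $F_4=\mathbb E_{(\mathbf v_1,\dots,\mathbf v_4)\sim\mathcal D_4}[x_{\mathbf v_1}x_{\mathbf v_2}x_{\mathbf v_3}x_{\mathbf v_4}]$.
   Context: Let $\mathbf e_1,\dots,\mathbf e_n$ be the standard basis of $\mathbb R^n$ and $V=\{\frac{1}{\sqrt3}(b_1\mathbf e_i+b_2\mathbf e_j+b_3\mathbf e_k): b_1,b_2,b_3\in\{-1,1\},\ 1\le i<j<k\le n\}$. For $k<n/2$, $\mathcal D_k$ is the distribution on $V^k$ obtained by sampling $2k+1$ distinct indices $i_1,\dots,i_{2k+1}\in[n]$ uniformly at random, sampling independent uniform signs $b_1,\dots,b_{2k+1}\in\{-1,1\}$, and returning $(\mathbf v_1,\dots,\mathbf v_k)$ with $\mathbf v_j=\frac{1}{\sqrt3}(b_1\mathbf e_{i_1}+b_{2j}\mathbf e_{i_{2j}}+b_{2j+1}\mathbf e_{i_{2j+1}})$. *)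

theory Defs
  imports "HOL-Probability.Probability"
begin

text \<open>Vectors of R^n are represented as functions nat => real supported on the
index set [n] = {1..n}. The vector (b1 e_i + b2 e_j + b3 e_k)/sqrt 3:\<close>
definition vec3 :: "nat \<Rightarrow> nat \<Rightarrow> nat \<Rightarrow> real \<Rightarrow> real \<Rightarrow> real \<Rightarrow> (nat \<Rightarrow> real)" where
  "vec3 i j k b1 b2 b3 = (\<lambda>t. (b1 * of_bool (t = i) + b2 * of_bool (t = j) + b3 * of_bool (t = k)) / sqrt 3)"

definition Vset :: "nat \<Rightarrow> (nat \<Rightarrow> real) set" where
  "Vset n = {vec3 i j k b1 b2 b3 | i j k b1 b2 b3.
      1 \<le> i \<and> i < j \<and> j < k \<and> k \<le> n \<and> b1 \<in> {-1, 1} \<and> b2 \<in> {-1, 1} \<and> b3 \<in> {-1, 1}}"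

definition Dspace :: "nat \<Rightarrow> nat \<Rightarrow> ((nat \<Rightarrow> nat) \<times> (nat \<Rightarrow> real)) set" where
  "Dspace n k = {(idx, b). idx \<in> {1..2*k+1} \<rightarrow>\<^sub>E {1..n} \<and> inj_on idx {1..2*k+1}
                          \<and> b \<in> {1..2*k+1} \<rightarrow>\<^sub>E {-1, 1}}"

definition Dvec :: "(nat \<Rightarrow> nat) \<Rightarrow> (nat \<Rightarrow> real) \<Rightarrow> nat \<Rightarrow> (nat \<Rightarrow> real)" where
  "Dvec idx b j = vec3 (idx 1) (idx (2*j)) (idx (2*j+1)) (b 1) (b (2*j)) (b (2*j+1))"

definition Fk :: "nat \<Rightarrow> nat \<Rightarrow> ((nat \<Rightarrow> real) \<Rightarrow> real) \<Rightarrow> real" where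
  "Fk n k x = measure_pmf.expectation (pmf_of_set (Dspace n k))
                (\<lambda>(idx, b). \<Prod>j\<in>{1..k}. x (Dvec idx b j))"

end

theory Submission
  imports Defs
begin


lemma vec3_swap12: "vec3 i j k b1 b2 b3 = vec3 j i k b2 b1 b3"
  unfolding vec3_def by (rule ext) (simp add: algebra_simps)
lemma vec3_swap23: "vec3 i j k b1 b2 b3 = vec3 i k j b1 b3 b2"
  unfolding vec3_def by (rule ext) (simp add: algebra_simps)

lemma vec3_sorted_in: "1 \<le> i \<Longrightarrow> i < j \<Longrightarrow> j < k \<Longrightarrow> k \<le> n \<Longrightarrow> b1 \<in> {-1,1} \<Longrightarrow> b2 \<in> {-1,1} \<Longrightarrow> b3 \<in> {-1,1}
  \<Longrightarrow> vec3 i j k b1 b2 b3 \<in> Vset n"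
  unfolding Vset_def by blast

lemma vec3_in_Vset:
  assumes "i \<in> {1..n}" "j \<in> {1..n}" "k \<in> {1..n}" "i \<noteq> j" "i \<noteq> k" "j \<noteq> k"
    "b1 \<in> {-1,1}" "b2 \<in> {-1,1}" "b3 \<in> {-1,1}"
  shows "vec3 i j k b1 b2 b3 \<in> Vset n"
proof -
  have "i < j \<or> j < i" "i < k \<or> k < i" "j < k \<or> k < j" using assms by auto
  then show ?thesis using assms
    by (smt (verit) atLeastAtMost_iff vec3_sorted_in vec3_swap12 vec3_swap23 order.strict_trans)
qed



lemma alg_eq: "(N::real) > 0 \<Longrightarrow> s > 0 \<Longrightarrow> (a + b) / N - a / s = b / N + a * (s - N) / (N * s)"
  by (simp add: field_simps)

lemma avg_diff:
  fixes f :: "'a \<Rightarrow> real"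
  assumes fin: "finite W" and sub: "S \<subseteq> W" and ne: "S \<noteq> {}" and bd: "\<And>w. w \<in> W \<Longrightarrow> \<bar>f w\<bar> \<le> 1"
  shows "\<bar>sum f W / card W - sum f S / card S\<bar> \<le> 2 * (real (card W) - card S) / card W"
proof -
  have finS: "finite S" using fin sub finite_subset by blast
  have cS: "card S > 0" using finS ne by (simp add: card_gt_0_iff)
  have cle: "card S \<le> card W" using card_mono[OF fin sub] .
  have cO: "card W > 0" using cS cle by linarith
  have split0: "sum f W = sum f (W - S) + sum f S" by (rule sum.subset_diff[OF sub fin])
  have split: "sum f W = sum f S + sum f (W - S)" using split0 by simp
  have d1: "\<bar>sum f (W - S)\<bar> \<le> real (card W) - card S"
  proof -
    have "\<bar>sum f (W - S)\<bar> \<le> (\<Sum>w\<in>W - S. \<bar>f w\<bar>)" by (rule sum_abs)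
    also have "\<dots> \<le> (\<Sum>w\<in>W - S. 1)" by (rule sum_mono) (use bd in auto)
    also have "\<dots> = real (card (W - S))" by simp
    also have "\<dots> = real (card W) - card S" using card_Diff_subset[OF finS sub] cle by simp
    finally show ?thesis .
  qed
  have d2: "\<bar>sum f S\<bar> \<le> card S"
  proof -
    have "\<bar>sum f S\<bar> \<le> (\<Sum>w\<in>S. \<bar>f w\<bar>)" by (rule sum_abs)
    also have "\<dots> \<le> (\<Sum>w\<in>S. 1)" by (rule sum_mono) (use bd sub in auto)
    finally show ?thesis by simp
  qed
  define a where "a = sum f S" define b where "b = sum f (W - S)"
  define N where "N = real (card W)" define s where "s = real (card S)"
  have sp: "s > 0" "s \<le> N" using cS cle by (auto simp: s_def N_def)
  have eq0: "sum f W / card W - sum f S / card S = (a + b) / N - a / s"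
    by (simp add: split a_def b_def N_def s_def)
  have eq: "sum f W / card W - sum f S / card S = b / N + a * (s - N) / (N * s)"
    unfolding eq0 by (rule alg_eq) (use sp in auto)
  have bN: "\<bar>b\<bar> \<le> N - s" using d1 by (simp add: b_def N_def s_def)
  have "\<bar>b / N\<bar> = \<bar>b\<bar> / N" using sp by simp
  also have "\<dots> \<le> (N - s) / N" using bN sp by (intro divide_right_mono) auto
  finally have "\<bar>b / N\<bar> \<le> (N - s) / N" .
  moreover have "\<bar>a * (s - N) / (N * s)\<bar> \<le> (N - s) / N"
  proof -
    have "\<bar>a * (s - N) / (N * s)\<bar> = \<bar>a\<bar> * (N - s) / (N * s)" using sp by (simp add: abs_mult abs_div_pos)
    also have "\<dots> \<le> s * (N - s) / (N * s)" using d2 sp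
      by (intro divide_right_mono mult_right_mono) (auto simp: a_def s_def)
    also have "\<dots> = (N - s) / N" using sp by simp
    finally show ?thesis .
  qed
  ultimately have "\<bar>b / N\<bar> + \<bar>a * (s - N) / (N * s)\<bar> \<le> (N - s) / N + (N - s) / N" by (rule add_mono)
  also have "\<dots> = 2 * (N - s) / N" by (simp add: add_divide_distrib[symmetric])
  finally have "\<bar>b / N + a * (s - N) / (N * s)\<bar> \<le> 2 * (N - s) / N"
    using abs_triangle_ineq order_trans by blast
  then show ?thesis using eq by (simp add: N_def s_def)
qed

definition Om :: "nat \<Rightarrow> nat \<Rightarrow> ((nat \<Rightarrow> nat) \<times> (nat \<Rightarrow> real)) set" where
  "Om n k = (PiE {1..2*k+1} (\<lambda>_. {1..n})) \<times> (PiE {1..2*k+1} (\<lambda>_. {-1,1::real}))"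

lemma finite_Om: "finite (Om n k)" unfolding Om_def by (auto intro!: finite_PiE)

lemma card2: "card {-1, 1::real} = 2" by simp

lemma card_PiE_const: "finite I \<Longrightarrow> card (PiE I (\<lambda>_. A)) = card A ^ card I"
  by (simp add: card_PiE)

lemma card_Om: "card (Om n k) = n^(2*k+1) * 2^(2*k+1)"
  unfolding Om_def card_cartesian_product by (simp only: card_PiE_const finite_atLeastAtMost card2 card_atLeastAtMost) simp

lemma Dspace_sub: "Dspace n k \<subseteq> Om n k" unfolding Om_def Dspace_def by auto

lemma Dspace_ne: assumes "2*k+1 \<le> n" shows "Dspace n k \<noteq> {}"
proof -
  have "(restrict id {1..2*k+1}, restrict (\<lambda>_. 1) {1..2*k+1}) \<in> Dspace n k"
    using assms unfolding Dspace_def by (auto simp: inj_on_def)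
  then show ?thesis by blast
qed

lemma card_eq_pair:
  fixes A :: "'b set"
  assumes I: "finite I" "r \<in> I" "s \<in> I" "r \<noteq> s" and A: "finite A"
  shows "card {g \<in> PiE I (\<lambda>_. A). g r = g s} \<le> card A ^ (card I - 1)"
proof -
  have "card {g \<in> PiE I (\<lambda>_. A). g r = g s} \<le> card (PiE (I - {s}) (\<lambda>_. A))"
  proof (rule card_inj_on_le[where f = "\<lambda>g. restrict g (I - {s})"])
    show "inj_on (\<lambda>g. restrict g (I - {s})) {g \<in> PiE I (\<lambda>_. A). g r = g s}"
    proof (rule inj_onI)
      fix g h assume g: "g \<in> {g \<in> PiE I (\<lambda>_. A). g r = g s}" and h: "h \<in> {g \<in> PiE I (\<lambda>_. A). g r = g s}"
        and e: "restrict g (I - {s}) = restrict h (I - {s})"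
      show "g = h"
      proof (rule ext)
        fix t
        have ge: "\<forall>t\<in>I - {s}. g t = h t" using e by (metis restrict_apply')
        show "g t = h t"
        proof (cases "t \<in> I")
          case True
          then show ?thesis using ge g h I by (cases "t = s") auto
        next
          case False
          then show ?thesis using g h by (auto simp: PiE_def extensional_def)
        qed
      qed
    qed
    show "(\<lambda>g. restrict g (I - {s})) ` {g \<in> PiE I (\<lambda>_. A). g r = g s} \<subseteq> PiE (I - {s}) (\<lambda>_. A)"
    proof
      fix h assume "h \<in> (\<lambda>g. restrict g (I - {s})) ` {g \<in> PiE I (\<lambda>_. A). g r = g s}"
      then obtain g where g: "g \<in> PiE I (\<lambda>_. A)" and h: "h = restrict g (I - {s})" by blast
      have "\<forall>i\<in>I - {s}. g i \<in> A" using g by (auto dest: PiE_mem)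
      then show "h \<in> PiE (I - {s}) (\<lambda>_. A)" using h by (simp add: restrict_PiE_iff)
    qed
    show "finite (PiE (I - {s}) (\<lambda>_. A))" using I A by (auto intro!: finite_PiE)
  qed
  also have "\<dots> = card A ^ (card I - 1)" using I by (simp add: card_PiE)
  finally show ?thesis .
qed

lemma bad_bound:
  "real (card (Om n k)) - card (Dspace n k) \<le> real ((2*k+1)^2 * n^(2*k) * 2^(2*k+1))"
proof -
  define I where "I = {1..2*k+1}"
  define Pr where "Pr = {(r,s). r \<in> I \<and> s \<in> I \<and> r \<noteq> s}"
  define E where "E r s = {g \<in> PiE I (\<lambda>_. {1..n}). g r = g s}" for r s
  have finI: "finite I" by (simp add: I_def)
  have cI: "card I = 2*k+1" by (simp add: I_def)
  have finPr: "finite Pr" by (rule finite_subset[of _ "I \<times> I"]) (use finI in \<open>auto simp: Pr_def\<close>)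
  have "card Pr \<le> card (I \<times> I)" unfolding Pr_def by (rule card_mono) (use finI in auto)
  then have cPr: "card Pr \<le> (2*k+1)^2" by (simp add: card_cartesian_product cI power2_eq_square)
  have diff: "Om n k - Dspace n k \<subseteq> (\<Union>p\<in>Pr. E (fst p) (snd p)) \<times> PiE I (\<lambda>_. {-1,1::real})"
  proof
    fix w assume w: "w \<in> Om n k - Dspace n k"
    obtain idx b where wd: "w = (idx, b)" by (cases w)
    have i1: "idx \<in> PiE I (\<lambda>_. {1..n})" "b \<in> PiE I (\<lambda>_. {-1,1::real})" using w wd by (auto simp: Om_def I_def)
    have "\<not> inj_on idx I" using w wd i1 by (auto simp: Dspace_def I_def)
    then obtain r s where "r \<in> I" "s \<in> I" "r \<noteq> s" "idx r = idx s" by (auto simp: inj_on_def)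
    then have "idx \<in> E r s" "(r,s) \<in> Pr" using i1 by (auto simp: E_def Pr_def)
    then show "w \<in> (\<Union>p\<in>Pr. E (fst p) (snd p)) \<times> PiE I (\<lambda>_. {-1,1::real})" using wd i1 by force
  qed
  have finE: "finite (E r s)" for r s unfolding E_def using finI by (auto intro!: finite_PiE)
  have "card (Om n k - Dspace n k) \<le> card ((\<Union>p\<in>Pr. E (fst p) (snd p)) \<times> PiE I (\<lambda>_. {-1,1::real}))"
    by (rule card_mono[OF _ diff]) (use finPr finE finI in \<open>auto intro!: finite_PiE\<close>)
  also have "\<dots> = card (\<Union>p\<in>Pr. E (fst p) (snd p)) * 2^(2*k+1)"
    unfolding card_cartesian_product by (simp only: card_PiE_const finI cI card2)
  also have "\<dots> \<le> (\<Sum>p\<in>Pr. card (E (fst p) (snd p))) * 2^(2*k+1)"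
    by (intro mult_right_mono card_UN_le finPr) simp
  also have "\<dots> \<le> (\<Sum>p\<in>Pr. n^(2*k)) * 2^(2*k+1)"
  proof (intro mult_right_mono sum_mono)
    fix p assume "p \<in> Pr"
    then show "card (E (fst p) (snd p)) \<le> n^(2*k)"
      using card_eq_pair[OF finI, of "fst p" "snd p" "{1..n}"] by (auto simp: Pr_def E_def cI)
  qed simp
  also have "\<dots> = card Pr * n^(2*k) * 2^(2*k+1)" by simp
  also have "\<dots> \<le> (2*k+1)^2 * n^(2*k) * 2^(2*k+1)" using cPr by (intro mult_right_mono) auto
  finally have "card (Om n k - Dspace n k) \<le> (2*k+1)^2 * n^(2*k) * 2^(2*k+1)" .
  moreover have "card (Om n k - Dspace n k) = card (Om n k) - card (Dspace n k)"
    by (rule card_Diff_subset[OF finite_subset[OF Dspace_sub finite_Om] Dspace_sub])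
  moreover have "card (Dspace n k) \<le> card (Om n k)" by (rule card_mono[OF finite_Om Dspace_sub])
  ultimately show ?thesis by (metis of_nat_diff of_nat_le_iff)
qed



definition Pset :: "nat \<Rightarrow> (nat \<times> nat \<times> real \<times> real) set" where
  "Pset n = {1..n} \<times> {1..n} \<times> {-1,1::real} \<times> {-1,1::real}"

definition ff :: "((nat \<Rightarrow> real) \<Rightarrow> real) \<Rightarrow> nat \<Rightarrow> (nat \<Rightarrow> nat) \<times> (nat \<Rightarrow> real) \<Rightarrow> real" where
  "ff y k = (\<lambda>(idx, b). \<Prod>j\<in>{1..k}. y (Dvec idx b j))"

definition GG :: "((nat \<Rightarrow> real) \<Rightarrow> real) \<Rightarrow> nat \<Rightarrow> real \<Rightarrow> nat \<times> nat \<times> real \<times> real \<Rightarrow> real" where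
  "GG y a s = (\<lambda>(p, q, t, u). y (vec3 a p q s t u))"

definition psi :: "nat \<Rightarrow> (nat \<Rightarrow> nat) \<times> (nat \<Rightarrow> real) \<Rightarrow> (nat \<times> real) \<times> (nat \<Rightarrow> nat \<times> nat \<times> real \<times> real)" where
  "psi k = (\<lambda>(idx, b). ((idx 1, b 1), \<lambda>j\<in>{1..k}. (idx (2*j), idx (2*j+1), b (2*j), b (2*j+1))))"

definition phi :: "nat \<Rightarrow> (nat \<times> real) \<times> (nat \<Rightarrow> nat \<times> nat \<times> real \<times> real) \<Rightarrow> (nat \<Rightarrow> nat) \<times> (nat \<Rightarrow> real)" where
  "phi k = (\<lambda>((a, s), w).
     (\<lambda>t\<in>{1..2*k+1}. if t = 1 then a else if even t then fst (w (t div 2)) else fst (snd (w (t div 2))),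
      \<lambda>t\<in>{1..2*k+1}. if t = 1 then s else if even t then fst (snd (snd (w (t div 2)))) else snd (snd (snd (w (t div 2))))))"

lemma idx_cases:
  fixes t k :: nat
  assumes "t \<in> {1..2*k+1}"
  obtains "t = 1" | j where "j \<in> {1..k}" "t = 2*j" "t div 2 = j" "even t" "t \<noteq> 1"
        | j where "j \<in> {1..k}" "t = 2*j+1" "t div 2 = j" "odd t" "t \<noteq> 1"
proof -
  consider "t = 1" | "even t" "t \<noteq> 1" | "odd t" "t \<noteq> 1" by blast
  then show ?thesis
  proof cases
    case 1 then show ?thesis using that by blast
  next
    case 2
    then have h: "t = 2 * (t div 2)" "t div 2 \<in> {1..k}" using assms by auto
    show ?thesis by (rule that(2)[of "t div 2"]) (use h 2 in auto)
  next
    case 3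
    have e: "2 * (t div 2) + 1 = t" using odd_two_times_div_two_succ 3 by blast
    then have h: "t = 2 * (t div 2) + 1" "t div 2 \<in> {1..k}" using assms 3 by auto
    show ?thesis by (rule that(3)[of "t div 2"]) (use h 3 in auto)
  qed
qed

lemma phi_psi: assumes "w \<in> Om n k" shows "phi k (psi k w) = w"
proof -
  obtain idx b where w: "w = (idx, b)" by (cases w)
  have idx: "idx \<in> PiE {1..2*k+1} (\<lambda>_. {1..n})" and b: "b \<in> PiE {1..2*k+1} (\<lambda>_. {-1,1::real})"
    using assms w by (auto simp: Om_def)
  have e1: "(\<lambda>t\<in>{1..2*k+1}. if t = 1 then idx 1 else if even t then fst ((\<lambda>j\<in>{1..k}. (idx (2*j), idx (2*j+1), b (2*j), b (2*j+1))) (t div 2))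
       else fst (snd ((\<lambda>j\<in>{1..k}. (idx (2*j), idx (2*j+1), b (2*j), b (2*j+1))) (t div 2)))) = idx"
  proof (rule ext)
    fix t show "(\<lambda>t\<in>{1..2*k+1}. if t = 1 then idx 1 else if even t then fst ((\<lambda>j\<in>{1..k}. (idx (2*j), idx (2*j+1), b (2*j), b (2*j+1))) (t div 2))
       else fst (snd ((\<lambda>j\<in>{1..k}. (idx (2*j), idx (2*j+1), b (2*j), b (2*j+1))) (t div 2)))) t = idx t"
    proof (cases "t \<in> {1..2*k+1}")
      case True
      then show ?thesis by (cases rule: idx_cases[OF True]) auto
    next
      case False
      then show ?thesis using idx by (auto simp: PiE_def extensional_def)
    qed
  qed
  have e2: "(\<lambda>t\<in>{1..2*k+1}. if t = 1 then b 1 else if even t then fst (snd (snd ((\<lambda>j\<in>{1..k}. (idx (2*j), idx (2*j+1), b (2*j), b (2*j+1))) (t div 2))))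
       else snd (snd (snd ((\<lambda>j\<in>{1..k}. (idx (2*j), idx (2*j+1), b (2*j), b (2*j+1))) (t div 2))))) = b"
  proof (rule ext)
    fix t show "(\<lambda>t\<in>{1..2*k+1}. if t = 1 then b 1 else if even t then fst (snd (snd ((\<lambda>j\<in>{1..k}. (idx (2*j), idx (2*j+1), b (2*j), b (2*j+1))) (t div 2))))
       else snd (snd (snd ((\<lambda>j\<in>{1..k}. (idx (2*j), idx (2*j+1), b (2*j), b (2*j+1))) (t div 2))))) t = b t"
    proof (cases "t \<in> {1..2*k+1}")
      case True
      then show ?thesis by (cases rule: idx_cases[OF True]) auto
    next
      case False
      then show ?thesis using b by (auto simp: PiE_def extensional_def)
    qed
  qed
  show ?thesis unfolding w psi_def phi_def by (simp only: prod.case e1 e2)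
qed

lemma psi_in: assumes "w \<in> Om n k"
  shows "psi k w \<in> ({1..n} \<times> {-1,1::real}) \<times> PiE {1..k} (\<lambda>_. Pset n)"
proof -
  obtain idx b where w: "w = (idx, b)" by (cases w)
  have idx: "idx \<in> PiE {1..2*k+1} (\<lambda>_. {1..n})" and b: "b \<in> PiE {1..2*k+1} (\<lambda>_. {-1,1::real})"
    using assms w by (auto simp: Om_def)
  have m: "\<And>t. t \<in> {1..2*k+1} \<Longrightarrow> idx t \<in> {1..n} \<and> b t \<in> {-1,1}" using idx b by (auto dest: PiE_mem)
  have "\<And>j. j \<in> {1..k} \<Longrightarrow> (idx (2*j), idx (2*j+1), b (2*j), b (2*j+1)) \<in> Pset n"
  proof -
    fix j assume j: "j \<in> {1..k}"
    then have "2*j \<in> {1..2*k+1}" "2*j+1 \<in> {1..2*k+1}" by auto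
    then show "(idx (2*j), idx (2*j+1), b (2*j), b (2*j+1)) \<in> Pset n" using m unfolding Pset_def by blast
  qed
  moreover have "1 \<in> {1..2*k+1}" by simp
  ultimately show ?thesis using m unfolding w psi_def by auto
qed

lemma psi_phi: assumes "v \<in> ({1..n} \<times> {-1,1::real}) \<times> PiE {1..k} (\<lambda>_. Pset n)"
  shows "psi k (phi k v) = v"
proof -
  obtain a s w where v: "v = ((a, s), w)" by (metis prod.collapse)
  have w: "w \<in> PiE {1..k} (\<lambda>_. Pset n)" using assms v by auto
  have ew: "(\<lambda>j\<in>{1..k}. ((\<lambda>t\<in>{1..2*k+1}. if t = 1 then a else if even t then fst (w (t div 2)) else fst (snd (w (t div 2)))) (2*j),
       (\<lambda>t\<in>{1..2*k+1}. if t = 1 then a else if even t then fst (w (t div 2)) else fst (snd (w (t div 2)))) (2*j+1),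
       (\<lambda>t\<in>{1..2*k+1}. if t = 1 then s else if even t then fst (snd (snd (w (t div 2)))) else snd (snd (snd (w (t div 2))))) (2*j),
       (\<lambda>t\<in>{1..2*k+1}. if t = 1 then s else if even t then fst (snd (snd (w (t div 2)))) else snd (snd (snd (w (t div 2))))) (2*j+1))) = w"
  proof (rule ext)
    fix j show "(\<lambda>j\<in>{1..k}. ((\<lambda>t\<in>{1..2*k+1}. if t = 1 then a else if even t then fst (w (t div 2)) else fst (snd (w (t div 2)))) (2*j),
       (\<lambda>t\<in>{1..2*k+1}. if t = 1 then a else if even t then fst (w (t div 2)) else fst (snd (w (t div 2)))) (2*j+1),
       (\<lambda>t\<in>{1..2*k+1}. if t = 1 then s else if even t then fst (snd (snd (w (t div 2)))) else snd (snd (snd (w (t div 2))))) (2*j),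
       (\<lambda>t\<in>{1..2*k+1}. if t = 1 then s else if even t then fst (snd (snd (w (t div 2)))) else snd (snd (snd (w (t div 2))))) (2*j+1))) j = w j"
    proof (cases "j \<in> {1..k}")
      case True
      then have "2*j \<in> {1..2*k+1}" "2*j+1 \<in> {1..2*k+1}" "2*j \<noteq> 1" "2*j+1 \<noteq> 1" "(2*j+1) div 2 = j" by auto
      then show ?thesis using True by simp
    next
      case False
      then show ?thesis using w by (auto simp: PiE_def extensional_def)
    qed
  qed
  show ?thesis unfolding v psi_def phi_def by (simp only: prod.case ew) simp
qed

lemma Pset_mem: "p \<in> Pset n \<Longrightarrow> fst p \<in> {1..n} \<and> fst (snd p) \<in> {1..n} \<and> fst (snd (snd p)) \<in> {-1,1} \<and> snd (snd (snd p)) \<in> {-1,1}"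
  unfolding Pset_def mem_Times_iff by blast

lemma phi_in: assumes "v \<in> ({1..n} \<times> {-1,1::real}) \<times> PiE {1..k} (\<lambda>_. Pset n)"
  shows "phi k v \<in> Om n k"
proof -
  obtain a s w where v: "v = ((a, s), w)" by (metis prod.collapse)
  have w: "w \<in> PiE {1..k} (\<lambda>_. Pset n)" and as: "a \<in> {1..n}" "s \<in> {-1,1}" using assms v by auto
  have wm: "\<And>t. t \<in> {1..2*k+1} \<Longrightarrow> t \<noteq> 1 \<Longrightarrow> w (t div 2) \<in> Pset n"
  proof -
    fix t assume t: "t \<in> {1..2*k+1}" "t \<noteq> 1"
    then have "t div 2 \<in> {1..k}" by auto
    then show "w (t div 2) \<in> Pset n" using w by (auto dest: PiE_mem)
  qed
  have A1: "\<forall>t\<in>{1..2*k+1}. (if t = 1 then a else if even t then fst (w (t div 2)) else fst (snd (w (t div 2)))) \<in> {1..n}"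
  proof
    fix t assume t: "t \<in> {1..2*k+1}"
    show "(if t = 1 then a else if even t then fst (w (t div 2)) else fst (snd (w (t div 2)))) \<in> {1..n}"
      by (cases "t = 1"; cases "even t") (use as Pset_mem[OF wm[OF t]] in simp_all)
  qed
  have A2: "\<forall>t\<in>{1..2*k+1}. (if t = 1 then s else if even t then fst (snd (snd (w (t div 2)))) else snd (snd (snd (w (t div 2))))) \<in> {-1,1}"
  proof
    fix t assume t: "t \<in> {1..2*k+1}"
    show "(if t = 1 then s else if even t then fst (snd (snd (w (t div 2)))) else snd (snd (snd (w (t div 2))))) \<in> {-1,1}"
      by (cases "t = 1"; cases "even t") (use as Pset_mem[OF wm[OF t]] in simp_all)
  qed
  show ?thesis unfolding v phi_def Om_def prod.case mem_Times_iff fst_conv snd_conv restrict_PiE_iff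
    using A1 A2 by blast
qed

lemma ff_psi: "w \<in> Om n k \<Longrightarrow> (\<lambda>((a, s), v). \<Prod>j\<in>{1..k}. GG y a s (v j)) (psi k w) = ff y k w"
  by (cases w) (simp add: psi_def ff_def GG_def Dvec_def)

lemma factor:
  "sum (ff y k) (Om n k) = (\<Sum>(a, s)\<in>{1..n} \<times> {-1,1::real}. (sum (GG y a s) (Pset n))^k)"
proof -
  have "sum (ff y k) (Om n k) = sum (\<lambda>((a, s), v). \<Prod>j\<in>{1..k}. GG y a s (v j)) (({1..n} \<times> {-1,1::real}) \<times> PiE {1..k} (\<lambda>_. Pset n))"
    by (rule sum.reindex_bij_witness[where i = "phi k" and j = "psi k"],
        (simp_all only: phi_psi psi_in psi_phi phi_in ff_psi))
  also have "\<dots> = (\<Sum>(a, s)\<in>{1..n} \<times> {-1,1::real}. \<Sum>v\<in>PiE {1..k} (\<lambda>_. Pset n). \<Prod>j\<in>{1..k}. GG y a s (v j))"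
    by (subst sum.cartesian_product[symmetric]) (simp add: case_prod_unfold)
  also have "\<dots> = (\<Sum>(a, s)\<in>{1..n} \<times> {-1,1::real}. (sum (GG y a s) (Pset n))^k)"
  proof (rule sum.cong[OF refl])
    fix q assume "q \<in> {1..n} \<times> {-1,1::real}"
    obtain a s where q: "q = (a, s)" by (cases q)
    have fP: "finite (Pset n)" by (simp add: Pset_def)
    have "(\<Sum>v\<in>PiE {1..k} (\<lambda>_. Pset n). \<Prod>j\<in>{1..k}. GG y a s (v j)) = (\<Prod>j\<in>{1..k}. sum (GG y a s) (Pset n))"
      using prod_sum_PiE[of "{1..k}" "\<lambda>_. Pset n" "\<lambda>_. GG y a s"] fP by simp
    also have "\<dots> = (sum (GG y a s) (Pset n))^k" by simp
    finally show "(case q of (a, s) \<Rightarrow> \<Sum>v\<in>PiE {1..k} (\<lambda>_. Pset n). \<Prod>j\<in>{1..k}. GG y a s (v j)) =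
       (case q of (a, s) \<Rightarrow> (sum (GG y a s) (Pset n))^k)" using q by simp
  qed
  finally show ?thesis .
qed



lemma ff_abs: assumes "\<And>v. \<bar>y v\<bar> \<le> 1" shows "\<bar>ff y k w\<bar> \<le> 1"
proof -
  obtain idx b where w: "w = (idx, b)" by (cases w)
  have "\<bar>ff y k w\<bar> = (\<Prod>j\<in>{1..k}. \<bar>y (Dvec idx b j)\<bar>)" by (simp add: w ff_def abs_prod)
  also have "\<dots> \<le> 1" by (rule prod_le_1) (use assms in auto)
  finally show ?thesis .
qed


lemma avg_abs: fixes f :: "'a \<Rightarrow> real" assumes "\<And>w. w \<in> A \<Longrightarrow> \<bar>f w\<bar> \<le> 1"
  shows "\<bar>sum f A / card A\<bar> \<le> 1"
proof -
  have "\<bar>sum f A\<bar> \<le> (\<Sum>w\<in>A. \<bar>f w\<bar>)" by (rule sum_abs)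
  also have "\<dots> \<le> (\<Sum>w\<in>A. 1)" by (rule sum_mono) (use assms in auto)
  finally have h: "\<bar>sum f A\<bar> \<le> card A" by simp
  show ?thesis
  proof (cases "card A = 0")
    case True then show ?thesis by simp
  next
    case False
    then have "\<bar>sum f A / card A\<bar> = \<bar>sum f A\<bar> / card A" by simp
    also have "\<dots> \<le> 1" using h False by simp
    finally show ?thesis .
  qed
qed


lemma Fk_eq:
  assumes n: "2*k+1 \<le> n" and hx: "\<forall>v\<in>Vset n. x v \<in> {-1,1}"
  shows "Fk n k x = sum (ff (\<lambda>v. if v \<in> Vset n then x v else 0) k) (Dspace n k) / card (Dspace n k)"
proof -
  have fin: "finite (Dspace n k)" using finite_subset[OF Dspace_sub finite_Om] .
  have ne: "Dspace n k \<noteq> {}" using Dspace_ne[OF n] .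
  have "Fk n k x = sum (\<lambda>(idx, b). \<Prod>j\<in>{1..k}. x (Dvec idx b j)) (Dspace n k) / card (Dspace n k)"
    unfolding Fk_def by (rule integral_pmf_of_set[OF ne fin])
  also have "sum (\<lambda>(idx, b). \<Prod>j\<in>{1..k}. x (Dvec idx b j)) (Dspace n k) = sum (ff (\<lambda>v. if v \<in> Vset n then x v else 0) k) (Dspace n k)"
  proof (rule sum.cong[OF refl])
    fix w assume w: "w \<in> Dspace n k"
    obtain idx b where wd: "w = (idx, b)" by (cases w)
    have idx: "idx \<in> PiE {1..2*k+1} (\<lambda>_. {1..n})" "inj_on idx {1..2*k+1}" and b: "b \<in> PiE {1..2*k+1} (\<lambda>_. {-1,1::real})"
      using w wd by (auto simp: Dspace_def)
    have "\<And>j. j \<in> {1..k} \<Longrightarrow> Dvec idx b j \<in> Vset n"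
    proof -
      fix j assume j: "j \<in> {1..k}"
      have m: "1 \<in> {1..2*k+1}" "2*j \<in> {1..2*k+1}" "2*j+1 \<in> {1..2*k+1}" using j by auto
      have ne: "(1::nat) \<noteq> 2*j" "(1::nat) \<noteq> 2*j+1" "2*j \<noteq> 2*j+1" using j by auto
      have d: "idx 1 \<noteq> idx (2*j)" "idx 1 \<noteq> idx (2*j+1)" "idx (2*j) \<noteq> idx (2*j+1)"
        using inj_on_contraD[OF idx(2) ne(1) m(1) m(2)] inj_on_contraD[OF idx(2) ne(2) m(1) m(3)]
          inj_on_contraD[OF idx(2) ne(3) m(2) m(3)] by auto
      have mm: "idx 1 \<in> {1..n}" "idx (2*j) \<in> {1..n}" "idx (2*j+1) \<in> {1..n}"
        "b 1 \<in> {-1,1}" "b (2*j) \<in> {-1,1}" "b (2*j+1) \<in> {-1,1}"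
        using PiE_mem[OF idx(1) m(1)] PiE_mem[OF idx(1) m(2)] PiE_mem[OF idx(1) m(3)]
          PiE_mem[OF b m(1)] PiE_mem[OF b m(2)] PiE_mem[OF b m(3)] by auto
      show "Dvec idx b j \<in> Vset n" unfolding Dvec_def
        by (rule vec3_in_Vset[OF mm(1,2,3) d mm(4,5,6)])
    qed
    then show "(case w of (idx, b) \<Rightarrow> \<Prod>j\<in>{1..k}. x (Dvec idx b j)) = ff (\<lambda>v. if v \<in> Vset n then x v else 0) k w"
      unfolding wd ff_def prod.case by (intro prod.cong[OF refl]) simp
  qed
  finally show ?thesis .
qed


lemma err_arith:
  assumes "n > 0" "X \<le> real (c * n^(2*k) * 2^(2*k+1))"
  shows "2 * X / real (n^(2*k+1) * 2^(2*k+1)) \<le> 2 * real c / real n"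
proof -
  have "2 * X / real (n^(2*k+1) * 2^(2*k+1)) \<le> 2 * real (c * n^(2*k) * 2^(2*k+1)) / real (n^(2*k+1) * 2^(2*k+1))"
    using assms by (intro divide_right_mono) auto
  also have "\<dots> = 2 * real c / real n"
  proof -
    define A where "A = real n ^ (2*k) * 2 ^ (2*k+1)"
    have Ap: "A > 0" using assms(1) by (simp add: A_def)
    have e1: "real (n^(2*k+1) * 2^(2*k+1)) = real n * A" by (simp add: A_def)
    have e2: "real (c * n^(2*k) * 2^(2*k+1)) = real c * A" by (simp add: A_def)
    show ?thesis unfolding e1 e2 using Ap by simp
  qed
  finally show ?thesis .
qed


lemma Fk_close:
  assumes n: "2*k+1 \<le> n" and hx: "\<forall>v\<in>Vset n. x v \<in> {-1,1}"
  shows "\<bar>sum (ff (\<lambda>v. if v \<in> Vset n then x v else 0) k) (Om n k) / card (Om n k) - Fk n k x\<bar> \<le> 2 * real ((2*k+1)^2) / real n"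
proof -
  define y where "y = (\<lambda>v. if v \<in> Vset n then x v else 0)"
  have yb: "\<bar>y v\<bar> \<le> 1" for v using hx by (auto simp: y_def)
  have "\<bar>sum (ff y k) (Om n k) / card (Om n k) - sum (ff y k) (Dspace n k) / card (Dspace n k)\<bar>
     \<le> 2 * (real (card (Om n k)) - card (Dspace n k)) / card (Om n k)"
    by (rule avg_diff[OF finite_Om Dspace_sub Dspace_ne[OF n]]) (rule ff_abs[OF yb])
  also have "\<dots> \<le> 2 * real ((2*k+1)^2) / real n"
    unfolding card_Om by (rule err_arith) (use n bad_bound[of n k] card_Om[of n k] in auto)
  finally show ?thesis using Fk_eq[OF n hx] by (simp add: y_def)
qed


lemma Fk_abs:
  assumes n: "2*k+1 \<le> n" and hx: "\<forall>v\<in>Vset n. x v \<in> {-1,1}"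
  shows "\<bar>Fk n k x\<bar> \<le> 1"
  unfolding Fk_eq[OF n hx] by (rule avg_abs, rule ff_abs) (use hx in auto)


lemma G_abs: assumes hx: "\<forall>v\<in>Vset n. x v \<in> {-1,1}"
  shows "\<bar>sum (ff (\<lambda>v. if v \<in> Vset n then x v else 0) k) (Om n k) / card (Om n k)\<bar> \<le> 1"
  by (rule avg_abs, rule ff_abs) (use hx in auto)





lemma G_rel:
  fixes y :: "(nat \<Rightarrow> real) \<Rightarrow> real"
  assumes n: "n > 0"
  shows "(sum (ff y 2) (Om n 2) / card (Om n 2))^2 \<le> sum (ff y 4) (Om n 4) / card (Om n 4)"
proof -
  define Q where "Q = {1..n} \<times> {-1,1::real}"
  define W where "W = (\<lambda>q. sum (GG y (fst q) (snd q)) (Pset n))"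
  have fac: "sum (ff y k) (Om n k) = (\<Sum>q\<in>Q. (W q)^k)" for k
    unfolding factor Q_def W_def by (simp add: case_prod_unfold)
  have cQ: "(\<Sum>q\<in>Q. (1::real)\<^sup>2) = 2 * real n"
    unfolding Q_def card_cartesian_product by (simp only: sum_constant card2 card_atLeastAtMost) simp
  define S2 where "S2 = (\<Sum>q\<in>Q. (W q)^2)"
  define S4 where "S4 = (\<Sum>q\<in>Q. (W q)^4)"
  have CS: "S2^2 \<le> S4 * (2 * real n)"
  proof -
    have "(\<Sum>q\<in>Q. (W q)^2 * 1)\<^sup>2 \<le> (\<Sum>q\<in>Q. ((W q)^2)\<^sup>2) * (\<Sum>q\<in>Q. (1::real)\<^sup>2)"
      by (rule Cauchy_Schwarz_ineq_sum)
    moreover have "(\<Sum>q\<in>Q. ((W q)^2)\<^sup>2) = S4" unfolding S4_def by (simp add: power_mult[symmetric])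
    ultimately show ?thesis unfolding cQ S2_def by simp
  qed
  define D2 where "D2 = real n ^ 5 * 32"
  define D4 where "D4 = real n ^ 9 * 512"
  have c2: "real (card (Om n 2)) = D2" unfolding card_Om D2_def by simp
  have c4: "real (card (Om n 4)) = D4" unfolding card_Om D4_def by simp
  have p10: "real n ^ 10 = real n * real n ^ 9" by (subst power_Suc[symmetric]) simp
  have DD: "D2^2 = (2 * real n) * D4" unfolding D2_def D4_def using p10 by (simp add: power2_eq_square)
  have D4p: "D4 > 0" using n by (simp add: D4_def)
  have np: "real n > 0" using n by simp
  have "(S2 / D2)^2 = S2^2 / ((2 * real n) * D4)" by (simp add: power_divide DD)
  also have "\<dots> \<le> S4 * (2 * real n) / ((2 * real n) * D4)"
    using CS D4p np by (intro divide_right_mono) auto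
  also have "\<dots> = S4 / D4" using np by simp
  finally show ?thesis unfolding fac c2 c4 S2_def S4_def .
qed

theorem mainTheorem8:
  shows "\<exists>C::real. C > 0 \<and> (\<exists>n0::nat. \<forall>n \<ge> n0. \<forall>x :: (nat \<Rightarrow> real) \<Rightarrow> real.
           (\<forall>v \<in> Vset n. x v \<in> {-1, 1}) \<longrightarrow> Fk n 4 x \<ge> (Fk n 2 x)^2 - C / real n)"
proof (rule exI[of _ 262], intro conjI exI[of _ "9::nat"] allI impI)
  show "(262::real) > 0" by simp
  fix n :: nat and x :: "(nat \<Rightarrow> real) \<Rightarrow> real"
  assume n: "9 \<le> n" and hx: "\<forall>v\<in>Vset n. x v \<in> {-1,1}"
  define y where "y = (\<lambda>v. if v \<in> Vset n then x v else 0)"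
  define G2 where "G2 = sum (ff y 2) (Om n 2) / card (Om n 2)"
  define G4 where "G4 = sum (ff y 4) (Om n 4) / card (Om n 4)"
  have n2: "2*2+1 \<le> n" and n4: "2*4+1 \<le> n" using n by auto
  have e2: "\<bar>G2 - Fk n 2 x\<bar> \<le> 50 / real n" using Fk_close[OF n2 hx] unfolding G2_def y_def by simp
  have e4: "\<bar>G4 - Fk n 4 x\<bar> \<le> 162 / real n" using Fk_close[OF n4 hx] unfolding G4_def y_def by simp
  have a2: "\<bar>G2\<bar> \<le> 1" using G_abs[OF hx] unfolding G2_def y_def .
  have f2: "\<bar>Fk n 2 x\<bar> \<le> 1" using Fk_abs[OF n2 hx] .
  have rel: "G2^2 \<le> G4" unfolding G2_def G4_def by (rule G_rel) (use n in simp)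
  have sq: "(Fk n 2 x)^2 - G2^2 \<le> 100 / real n"
  proof -
    have "(Fk n 2 x)^2 - G2^2 = (Fk n 2 x - G2) * (Fk n 2 x + G2)" by (simp add: power2_eq_square algebra_simps)
    also have "\<dots> \<le> \<bar>Fk n 2 x - G2\<bar> * \<bar>Fk n 2 x + G2\<bar>" by (metis abs_ge_self abs_mult)
    also have "\<dots> \<le> (50 / real n) * 2"
      using e2 a2 f2 by (intro mult_mono) auto
    finally show ?thesis by simp
  qed
  have "(Fk n 2 x)^2 - 262 / real n = ((Fk n 2 x)^2 - 100 / real n) - 162 / real n" by simp
  also have "\<dots> \<le> G4 - 162 / real n" using sq rel by simp
  also have "\<dots> \<le> Fk n 4 x" using e4 by simp
  finally show "Fk n 4 x \<ge> (Fk n 2 x)^2 - 262 / real n" .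
qed


end
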